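(* Let $F$, $H$, $X$, $\Omega$, $Q$ and the sequences generated by the IneIREG method be as described in the context, and suppose $H$ is $\mu$-strongly monotone for some $\mu>0$. Suppose $(\eta_k)$ is nonincreasing; $0<\lambda_k<1/L_k$ for all $k\ge0$, where $L_k:=L_F+\eta_kL_H$; and $\alpha_0\in[0,1]$ and $\alpha_{k+1}\le(1-\beta_k)\alpha_k$ for all $k\ge0$, where $\beta_k:=\big(\frac{1}{1-\lambda_k^2L_k^2}+\frac{1}{2\lambda_k\eta_k\mu}\big)^{-1}$. Define $p_{-1}:=1$, $p_k:=\big(\prod_{i=0}^k(1-\beta_i)\big)^{-1}$ for $k\ge0$, and for $k\ge1$, $\Lambda_k:=\sum_{j=0}^{k-1}\lambda_j\eta_jp_j$, $\overline y_k:=\Lambda_k^{-1}\sum_{j=0}^{k-1}\lambda_j\eta_jp_jy_j$. Then for all $k\ge1$, $$0\le\mathrm{Gap}(\overline y_k,F,X)\le\frac{1}{2\Lambda_k}\Big(\eta_0D_X^2+\sum_{j=0}^{k-1}\eta_jp_{j-1}\delta_j+2\Big(\sum_{j=0}^{k-1}\lambda_j\eta_j^2p_j\Big)C_HD_X\Big).$$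
   Context: Work in $\mathbb{R}^n$ with Euclidean inner product $\langle\cdot,\cdot\rangle$ and norm $\|\cdot\|$. The maps $F\colon \mathrm{Dom}\,F\to\mathbb{R}^n$ and $H\colon\mathrm{Dom}\,H\to\mathbb{R}^n$ are monotone and Lipschitz continuous with constants $L_F>0$ and $L_H>0$; $H$ is $\mu$-strongly monotone means $\langle H(x)-H(y),x-y\rangle\ge\mu\|x-y\|^2$ for all $x,y\in\mathrm{Dom}\,H$. $X$ is a nonempty compact convex set and $\Omega$ a nonempty closed convex set with $X\subset\Omega\subset\mathrm{Dom}\,F\cap\mathrm{Dom}\,H$; $P_X,P_\Omega$ denote orthogonal projections. $Q:=\{x\in X:\langle F(x),y-x\rangle\ge0\ \forall y\in X\}$ is assumed nonempty. $D_X:=\sup_{x,y\in X}\|x-y\|$, $C_H:=\sup_{x\in X}\|H(x)\|$. $\mathrm{Gap}(z,F,X):=\sup_{x\in X}\langle F(x),z-x\rangle$. IneIREG method: start with $x_0=x_{-1}\in X$; for $k=0,1,\dots$, with parameters $\alpha_k\ge0$, $\lambda_k>0$, $\eta_k>0$, set $w_k=x_k+\alpha_k(x_k-x_{k-1})$, $w'_k=P_\Omega(w_k)$, $y_k=P_X\big(w_k-\lambda_k(F(w'_k)+\eta_kH(w'_k))\big)$, $x_{k+1}=P_X\big(w_k-\lambda_k(F(y_k)+\eta_kH(y_k))\big)$. Also $\delta_k:=\alpha_k(1+\alpha_k)\|x_k-x_{k-1}\|^2$ for $k\ge0$. *)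

theory Defs
  imports "HOL-Analysis.Analysis"
begin

definition monotone_op :: "('a::real_inner \<Rightarrow> 'a) \<Rightarrow> 'a set \<Rightarrow> bool" where
  "monotone_op F D \<longleftrightarrow> (\<forall>x\<in>D. \<forall>y\<in>D. inner (F x - F y) (x - y) \<ge> 0)"

definition strongly_monotone_op :: "real \<Rightarrow> ('a::real_inner \<Rightarrow> 'a) \<Rightarrow> 'a set \<Rightarrow> bool" where
  "strongly_monotone_op \<mu> F D \<longleftrightarrow>
     (\<forall>x\<in>D. \<forall>y\<in>D. inner (F x - F y) (x - y) \<ge> \<mu> * (norm (x - y))\<^sup>2)"

definition Gap :: "'a::real_inner \<Rightarrow> ('a \<Rightarrow> 'a) \<Rightarrow> 'a set \<Rightarrow> real" where
  "Gap z F X = (SUP x\<in>X. inner (F x) (z - x))"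

end

theory Submission
  imports Defs
begin

lemma proj_step:
  fixes G :: "'a::euclidean_space \<Rightarrow> 'a"
  assumes cX: "convex X" "closed X" "X \<noteq> {}" and cO: "convex \<Omega>" "closed \<Omega>" "\<Omega> \<noteq> {}"
    and sub: "X \<subseteq> \<Omega>"
    and w'd: "w' = closest_point \<Omega> w"
    and yd: "y = closest_point X (w - lam *\<^sub>R G w')"
    and x1d: "x1 = closest_point X (w - lam *\<^sub>R G y)"
    and Gl: "norm (G y - G w') \<le> L * norm (y - w')"
    and u: "u \<in> X" and lam: "lam > 0" and L: "L \<ge> 0"
  shows "(norm (x1 - u))\<^sup>2 \<le> (norm (w - u))\<^sup>2 - (1 - lam\<^sup>2 * L\<^sup>2) * (norm (w - y))\<^sup>2
           + 2 * lam * inner (G y) (u - y)"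
proof -
  have yX: "y \<in> X" using yd closest_point_in_set cX by blast
  have x1X: "x1 \<in> X" using x1d closest_point_in_set cX by blast
  have E1: "inner ((w - lam *\<^sub>R G y) - x1) (u - x1) \<le> 0"
    using closest_point_dot[OF cX(1,2) u] x1d by blast
  have E2: "inner ((w - lam *\<^sub>R G w') - y) (x1 - y) \<le> 0"
    using closest_point_dot[OF cX(1,2) x1X] yd by blast
  have id: "(norm (x1 - u))\<^sup>2 = (norm (w - u))\<^sup>2 - (norm (w - y))\<^sup>2 - (norm (y - x1))\<^sup>2
     + 2 * lam * inner (G y) (u - y) + 2 * lam * inner (G y - G w') (y - x1)
     + 2 * inner ((w - lam *\<^sub>R G y) - x1) (u - x1) + 2 * inner ((w - lam *\<^sub>R G w') - y) (x1 - y)"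
    by (simp add: power2_norm_eq_inner inner_simps inner_commute algebra_simps)
  have yO: "y \<in> \<Omega>" using yX sub by blast
  have "norm (y - w') = dist (closest_point \<Omega> y) (closest_point \<Omega> w)"
    using closest_point_self[OF yO] w'd by (simp add: dist_norm)
  also have "\<dots> \<le> dist y w" by (rule closest_point_lipschitz[OF cO])
  finally have yw': "norm (y - w') \<le> norm (w - y)" by (simp add: dist_norm norm_minus_commute)
  have "inner (G y - G w') (y - x1) \<le> norm (G y - G w') * norm (y - x1)"
    by (rule norm_cauchy_schwarz)
  also have "\<dots> \<le> L * norm (w - y) * norm (y - x1)"
    using Gl yw' L by (meson mult_left_mono mult_right_mono norm_ge_zero order_trans)
  finally have C: "inner (G y - G w') (y - x1) \<le> L * norm (w - y) * norm (y - x1)" .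
  have Q: "2 * lam * (L * norm (w - y) * norm (y - x1)) \<le> lam\<^sup>2 * L\<^sup>2 * (norm (w - y))\<^sup>2 + (norm (y - x1))\<^sup>2"
  proof -
    have "0 \<le> (lam * L * norm (w - y) - norm (y - x1))\<^sup>2" by simp
    then show ?thesis by (simp add: power2_eq_square algebra_simps)
  qed
  have "2 * lam * inner (G y - G w') (y - x1) \<le> 2 * lam * (L * norm (w - y) * norm (y - x1))"
    using C lam by simp
  then show ?thesis using id E1 E2 Q by (simp add: algebra_simps)
qed


lemma beta_ineq:
  fixes a b s t d :: real
  assumes a: "a > 0" and b: "b > 0" and s: "s \<ge> 0" and t: "t \<ge> 0" and d: "0 \<le> d" "d \<le> s + t"
  shows "(1 / (1 / a + 1 / b)) * d\<^sup>2 \<le> a * s\<^sup>2 + b * t\<^sup>2"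
proof -
  have e: "1 / (1 / a + 1 / b) = a * b / (a + b)" using a b by (simp add: field_simps)
  have "d\<^sup>2 \<le> (s + t)\<^sup>2" using d by (simp add: power_mono)
  hence "a * b / (a + b) * d\<^sup>2 \<le> a * b / (a + b) * (s + t)\<^sup>2"
    using a b by (intro mult_left_mono) auto
  also have "\<dots> \<le> a * s\<^sup>2 + b * t\<^sup>2"
  proof -
    have "0 \<le> (a * s - b * t)\<^sup>2" by simp
    hence "a * b * (s + t)\<^sup>2 \<le> (a * s\<^sup>2 + b * t\<^sup>2) * (a + b)"
      by (simp add: power2_eq_square algebra_simps)
    thus ?thesis using a b by (simp add: pos_divide_le_eq)
  qed
  finally show ?thesis using e by simp
qed

lemma step_core:
  fixes F H :: "'a::euclidean_space \<Rightarrow> 'a"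
  assumes cX: "convex X" "closed X" "X \<noteq> {}" and cO: "convex \<Omega>" "closed \<Omega>" "\<Omega> \<noteq> {}"
    and sub: "X \<subseteq> \<Omega>" and Osub: "\<Omega> \<subseteq> DomF \<inter> DomH"
    and Fm: "monotone_op F DomF" and Hs: "strongly_monotone_op \<mu> H DomH"
    and Fl: "lipschitz_on LF DomF F" and Hl: "lipschitz_on LH DomH H"
    and LF: "LF > 0" and LH: "LH > 0" and mu: "\<mu> > 0" and lam: "lam > 0" and eta: "eta > 0"
    and lb: "lam < 1 / (LF + eta * LH)"
    and w'd: "w' = closest_point \<Omega> w"
    and yd: "y = closest_point X (w - lam *\<^sub>R (F w' + eta *\<^sub>R H w'))"
    and x1d: "x1 = closest_point X (w - lam *\<^sub>R (F y + eta *\<^sub>R H y))"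
    and u: "u \<in> X"
  shows "(norm (x1 - u))\<^sup>2 \<le> (1 - 1 / (1 / (1 - lam\<^sup>2 * (LF + eta * LH)\<^sup>2) + 1 / (2 * lam * eta * \<mu>)))
            * (norm (w - u))\<^sup>2 - 2 * lam * inner (F u) (y - u) + 2 * lam * eta * inner (H u) (u - y)"
proof -
  define L where "L = LF + eta * LH"
  define G where "G = (\<lambda>z. F z + eta *\<^sub>R H z)"
  have Lp: "L > 0" using LF LH eta unfolding L_def by (simp add: add_pos_pos)
  have yX: "y \<in> X" using yd closest_point_in_set cX by blast
  have w'O: "w' \<in> \<Omega>" using w'd closest_point_in_set cO by blast
  have yD: "y \<in> DomF" "y \<in> DomH" using yX sub Osub by auto
  have w'D: "w' \<in> DomF" "w' \<in> DomH" using w'O Osub by auto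
  have uD: "u \<in> DomF" "u \<in> DomH" using u sub Osub by auto
  have Gl: "norm (G y - G w') \<le> L * norm (y - w')"
  proof -
    have "norm (G y - G w') = norm ((F y - F w') + eta *\<^sub>R (H y - H w'))"
      unfolding G_def by (simp add: algebra_simps)
    also have "\<dots> \<le> norm (F y - F w') + eta * norm (H y - H w')"
      using eta by (metis (no_types, lifting) abs_of_pos norm_scaleR norm_triangle_ineq)
    also have "\<dots> \<le> LF * norm (y - w') + eta * (LH * norm (y - w'))"
    proof -
      have "norm (F y - F w') \<le> LF * norm (y - w')"
        using Fl yD w'D unfolding lipschitz_on_def by (simp add: dist_norm)
      moreover have "norm (H y - H w') \<le> LH * norm (y - w')"
        using Hl yD w'D unfolding lipschitz_on_def by (simp add: dist_norm)
      ultimately show ?thesis using eta by (smt (verit) mult_left_mono)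
    qed
    also have "\<dots> = L * norm (y - w')" unfolding L_def by (simp add: algebra_simps)
    finally show ?thesis .
  qed
  have A: "(norm (x1 - u))\<^sup>2 \<le> (norm (w - u))\<^sup>2 - (1 - lam\<^sup>2 * L\<^sup>2) * (norm (w - y))\<^sup>2
           + 2 * lam * inner (G y) (u - y)"
    by (rule proj_step[OF cX cO sub w'd _ _ Gl u lam]) (use yd x1d Lp G_def in auto)
  have Fmon: "inner (F y) (u - y) \<le> - inner (F u) (y - u)"
  proof -
    have "inner (F y - F u) (y - u) \<ge> 0" using Fm yD uD unfolding monotone_op_def by blast
    thus ?thesis by (simp add: inner_simps inner_commute algebra_simps)
  qed
  have Hmon: "inner (H y) (u - y) \<le> inner (H u) (u - y) - \<mu> * (norm (y - u))\<^sup>2"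
  proof -
    have "inner (H y - H u) (y - u) \<ge> \<mu> * (norm (y - u))\<^sup>2" using Hs yD uD unfolding strongly_monotone_op_def by blast
    thus ?thesis by (simp add: inner_simps inner_commute algebra_simps)
  qed
  have Gin: "inner (G y) (u - y) \<le> - inner (F u) (y - u) + eta * inner (H u) (u - y) - eta * \<mu> * (norm (y - u))\<^sup>2"
  proof -
    have "inner (G y) (u - y) = inner (F y) (u - y) + eta * inner (H y) (u - y)"
      unfolding G_def by (simp add: inner_simps right_diff_distrib)
    also have "\<dots> \<le> - inner (F u) (y - u) + eta * (inner (H u) (u - y) - \<mu> * (norm (y - u))\<^sup>2)"
      using Fmon Hmon eta by (smt (verit) mult_left_mono)
    finally show ?thesis by (simp add: algebra_simps)
  qed
  have lL: "lam * L < 1" using lb Lp lam unfolding L_def by (simp add: field_simps)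
  have a: "1 - lam\<^sup>2 * L\<^sup>2 > 0"
  proof -
    have "lam * L \<ge> 0" using lam Lp by simp
    hence "(lam * L)\<^sup>2 < 1" using lL by (simp add: power_less_one_iff abs_less_iff)
    thus ?thesis by (simp add: power_mult_distrib)
  qed
  have b: "2 * lam * eta * \<mu> > 0" using lam eta mu by simp
  have B: "(1 / (1 / (1 - lam\<^sup>2 * L\<^sup>2) + 1 / (2 * lam * eta * \<mu>))) * (norm (w - u))\<^sup>2
      \<le> (1 - lam\<^sup>2 * L\<^sup>2) * (norm (w - y))\<^sup>2 + (2 * lam * eta * \<mu>) * (norm (y - u))\<^sup>2"
    by (rule beta_ineq[OF a b]) (auto intro: norm_diff_triangle_le)
  have Gin2: "2 * lam * inner (G y) (u - y) \<le> 2 * lam * (- inner (F u) (y - u) + eta * inner (H u) (u - y) - eta * \<mu> * (norm (y - u))\<^sup>2)"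
    using Gin lam by (intro mult_left_mono) auto
  have e3: "2 * lam * (- inner (F u) (y - u) + eta * inner (H u) (u - y) - eta * \<mu> * (norm (y - u))\<^sup>2)
     = - 2 * lam * inner (F u) (y - u) + 2 * lam * eta * inner (H u) (u - y) - (2 * lam * eta * \<mu>) * (norm (y - u))\<^sup>2"
    by (simp add: algebra_simps)
  have e4: "(1 - 1 / (1 / (1 - lam\<^sup>2 * L\<^sup>2) + 1 / (2 * lam * eta * \<mu>))) * (norm (w - u))\<^sup>2
     = (norm (w - u))\<^sup>2 - (1 / (1 / (1 - lam\<^sup>2 * L\<^sup>2) + 1 / (2 * lam * eta * \<mu>))) * (norm (w - u))\<^sup>2"
    by (simp add: algebra_simps)
  show ?thesis unfolding L_def[symmetric] e4 using A B Gin2 e3 by linarith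
qed


lemma inert_id:
  fixes U V :: "'a::real_inner" and a :: real
  shows "(norm ((1 + a) *\<^sub>R U - a *\<^sub>R V))\<^sup>2 = (1 + a) * (norm U)\<^sup>2 - a * (norm V)\<^sup>2 + a * (1 + a) * (norm (U - V))\<^sup>2"
  by (simp add: power2_norm_eq_inner inner_simps inner_commute algebra_simps)

theorem proposition4p7:
  fixes F H :: "'a::euclidean_space \<Rightarrow> 'a"
    and DomF DomH X \<Omega> :: "'a set"
    and LF LH \<mu> :: real
    and \<alpha> lam \<eta> :: "nat \<Rightarrow> real"
    and x w w' y :: "nat \<Rightarrow> 'a"
    and xm1 :: 'a
  assumes F_mono: "monotone_op F DomF"
    and H_mono: "monotone_op H DomH"
    and F_lip: "lipschitz_on LF DomF F" and LF_pos: "LF > 0"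
    and H_lip: "lipschitz_on LH DomH H" and LH_pos: "LH > 0"
    and mu_pos: "\<mu> > 0"
    and H_strong: "strongly_monotone_op \<mu> H DomH"
    and X_ne: "X \<noteq> {}" and X_compact: "compact X" and X_convex: "convex X"
    and Om_ne: "\<Omega> \<noteq> {}" and Om_closed: "closed \<Omega>" and Om_convex: "convex \<Omega>"
    and X_sub: "X \<subseteq> \<Omega>" and Om_sub: "\<Omega> \<subseteq> DomF \<inter> DomH"
    and Q_ne: "{z\<in>X. \<forall>v\<in>X. inner (F z) (v - z) \<ge> 0} \<noteq> {}"
    and x0: "x 0 \<in> X" and xm1_def: "xm1 = x 0"
    and alpha_nonneg: "\<And>k. \<alpha> k \<ge> 0"
    and lambda_pos: "\<And>k. lam k > 0"
    and eta_pos: "\<And>k. \<eta> k > 0"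
    and w_def: "\<And>k. w k = x k + \<alpha> k *\<^sub>R (x k - (if k = 0 then xm1 else x (k - 1)))"
    and w'_def: "\<And>k. w' k = closest_point \<Omega> (w k)"
    and y_def: "\<And>k. y k = closest_point X (w k - lam k *\<^sub>R (F (w' k) + \<eta> k *\<^sub>R H (w' k)))"
    and x_next: "\<And>k. x (Suc k) = closest_point X (w k - lam k *\<^sub>R (F (y k) + \<eta> k *\<^sub>R H (y k)))"
    and eta_noninc: "\<And>k. \<eta> (Suc k) \<le> \<eta> k"
    and lambda_bound: "\<And>k. lam k < 1 / (LF + \<eta> k * LH)"
    and alpha0: "\<alpha> 0 \<le> 1"
    and alpha_rec: "\<And>k. \<alpha> (Suc k) \<le>
        (1 - 1 / (1 / (1 - (lam k)\<^sup>2 * (LF + \<eta> k * LH)\<^sup>2) + 1 / (2 * lam k * \<eta> k * \<mu>))) * \<alpha> k"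
    and k_ge: "k \<ge> 1"
  shows "let L = (%j. LF + \<eta> j * LH);
             \<beta> = (%j. 1 / (1 / (1 - (lam j)\<^sup>2 * (L j)\<^sup>2) + 1 / (2 * lam j * \<eta> j * \<mu>)));
             p = (%j. 1 / (\<Prod>i\<le>j. (1 - \<beta> i)));
             pm1 = (%j. if j = 0 then 1 else p (j - 1));
             xprev = (%j. if j = 0 then xm1 else x (j - 1));
             \<delta> = (%j. \<alpha> j * (1 + \<alpha> j) * (norm (x j - xprev j))\<^sup>2);
             Lam = (\<Sum>j<k. lam j * \<eta> j * p j);
             ybar = (1 / Lam) *\<^sub>R (\<Sum>j<k. (lam j * \<eta> j * p j) *\<^sub>R y j);
             DX = diameter X;
             CH = (SUP z\<in>X. norm (H z))
         in 0 \<le> Gap ybar F X \<and>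
            Gap ybar F X \<le> 1 / (2 * Lam) *
              (\<eta> 0 * DX\<^sup>2 + (\<Sum>j<k. \<eta> j * pm1 j * \<delta> j)
               + 2 * (\<Sum>j<k. lam j * (\<eta> j)\<^sup>2 * p j) * CH * DX)"
proof -
  define L where "L = (%j. LF + \<eta> j * LH)"
  define \<beta> where "\<beta> = (%j. 1 / (1 / (1 - (lam j)\<^sup>2 * (L j)\<^sup>2) + 1 / (2 * lam j * \<eta> j * \<mu>)))"
  define p where "p = (%j. 1 / (\<Prod>i\<le>j. (1 - \<beta> i)))"
  define pm1 where "pm1 = (%j. if j = 0 then 1 else p (j - 1))"
  define xprev where "xprev = (%j. if j = 0 then xm1 else x (j - 1))"
  define \<delta> where "\<delta> = (%j. \<alpha> j * (1 + \<alpha> j) * (norm (x j - xprev j))\<^sup>2)"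
  define Lam where "Lam = (\<Sum>j<k. lam j * \<eta> j * p j)"
  define ybar where "ybar = (1 / Lam) *\<^sub>R (\<Sum>j<k. (lam j * \<eta> j * p j) *\<^sub>R y j)"
  define DX where "DX = diameter X"
  define CH where "CH = (SUP z\<in>X. norm (H z))"
  define wt where "wt = (%j. lam j * \<eta> j * p j)"
  define c where "c = (%j. \<eta> j * pm1 j * \<alpha> j)"
  have X_closed: "closed X" using X_compact compact_imp_closed by blast
  have Lp: "\<And>j. L j > 0" using LF_pos LH_pos eta_pos unfolding L_def by (simp add: add_pos_pos)
  have a: "\<And>j. 1 - (lam j)\<^sup>2 * (L j)\<^sup>2 > 0 \<and> 1 - (lam j)\<^sup>2 * (L j)\<^sup>2 \<le> 1"
  proof -
    fix j
    have lL: "lam j * L j < 1" using lambda_bound[of j] Lp[of j] lambda_pos[of j] unfolding L_def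
      by (simp add: field_simps)
    have "lam j * L j \<ge> 0" using lambda_pos[of j] Lp[of j] by simp
    hence "(lam j * L j)\<^sup>2 < 1" using lL by (simp add: power_less_one_iff abs_less_iff)
    thus "1 - (lam j)\<^sup>2 * (L j)\<^sup>2 > 0 \<and> 1 - (lam j)\<^sup>2 * (L j)\<^sup>2 \<le> 1" by (simp add: power_mult_distrib)
  qed
  have bet: "\<And>j. 0 < \<beta> j \<and> \<beta> j < 1"
  proof -
    fix j
    define A where "A = 1 - (lam j)\<^sup>2 * (L j)\<^sup>2"
    define B where "B = 2 * lam j * \<eta> j * \<mu>"
    have A: "0 < A" "A \<le> 1" using a[of j] unfolding A_def by auto
    have B: "B > 0" unfolding B_def using lambda_pos[of j] eta_pos[of j] mu_pos by simp
    have "1 / A \<ge> 1" using A by simp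
    moreover have "1 / B > 0" using B by simp
    ultimately have "1 / A + 1 / B > 1" by linarith
    hence "0 < 1 / (1 / A + 1 / B) \<and> 1 / (1 / A + 1 / B) < 1" by (simp add: divide_less_eq)
    thus "0 < \<beta> j \<and> \<beta> j < 1" unfolding \<beta>_def A_def B_def .
  qed
  have prodpos: "\<And>j. (\<Prod>i\<le>j. (1 - \<beta> i)) > 0" using bet by (intro prod_pos) (auto simp: algebra_simps)
  have ppos: "\<And>j. p j > 0" unfolding p_def using prodpos by simp
  have pm1pos: "\<And>j. pm1 j > 0" unfolding pm1_def using ppos by simp
  have prec: "\<And>j. p j * (1 - \<beta> j) = pm1 j"
  proof -
    fix j show "p j * (1 - \<beta> j) = pm1 j"
    proof (cases j)
      case 0 then show ?thesis using bet[of 0] unfolding p_def pm1_def by simp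
    next
      case (Suc i)
      have "(\<Prod>l\<le>Suc i. (1 - \<beta> l)) = (\<Prod>l\<le>i. (1 - \<beta> l)) * (1 - \<beta> (Suc i))" by simp
      then show ?thesis using Suc bet[of j] prodpos[of i] unfolding p_def pm1_def by simp
    qed
  qed
  have xX: "\<And>j. x j \<in> X"
  proof -
    fix j show "x j \<in> X"
      by (cases j) (use x0 x_next closest_point_in_set[OF X_closed X_ne] in auto)
  qed
  have xprevX: "\<And>j. xprev j \<in> X" unfolding xprev_def using xX xm1_def by auto
  have yX: "\<And>j. y j \<in> X" using y_def closest_point_in_set[OF X_closed X_ne] by auto
  have bX: "bounded X" using X_compact compact_imp_bounded by blast
  have dX: "\<And>u v. u \<in> X \<Longrightarrow> v \<in> X \<Longrightarrow> norm (u - v) \<le> DX"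
    unfolding DX_def using diameter_bounded_bound[OF bX] by (simp add: dist_norm)
  have DXnn: "DX \<ge> 0" using dX[OF x0 x0] by simp
  have bddH: "bdd_above ((\<lambda>z. norm (H z)) ` X)"
  proof -
    have "continuous_on X H"
      using lipschitz_on_continuous_on[OF H_lip] X_sub Om_sub continuous_on_subset by blast
    hence "compact (H ` X)" using compact_continuous_image X_compact by blast
    hence "bounded (H ` X)" by (rule compact_imp_bounded)
    then obtain B where "\<forall>v\<in>H ` X. norm v \<le> B" unfolding bounded_iff by blast
    thus ?thesis by (intro bdd_aboveI2[where M=B]) auto
  qed
  have CH: "\<And>z. z \<in> X \<Longrightarrow> norm (H z) \<le> CH" unfolding CH_def using bddH by (intro cSUP_upper) auto
  have CHnn: "CH \<ge> 0" using CH[OF x0] norm_ge_zero order_trans by blast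
  have arec: "\<And>j. \<alpha> (Suc j) \<le> (1 - \<beta> j) * \<alpha> j" using alpha_rec unfolding \<beta>_def L_def by simp
  have cnn: "\<And>j. c j \<ge> 0" unfolding c_def using eta_pos pm1pos alpha_nonneg
    by (simp add: less_imp_le)
  have cmono: "\<And>j. c (Suc j) \<le> c j"
  proof -
    fix j
    have "c (Suc j) = \<eta> (Suc j) * (p j * \<alpha> (Suc j))" unfolding c_def pm1_def by simp
    also have "\<dots> \<le> \<eta> j * (p j * ((1 - \<beta> j) * \<alpha> j))"
    proof (rule mult_mono)
      show "\<eta> (Suc j) \<le> \<eta> j" by (rule eta_noninc)
      show "p j * \<alpha> (Suc j) \<le> p j * ((1 - \<beta> j) * \<alpha> j)"
        using arec[of j] ppos[of j] by (simp add: mult_left_mono)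
      show "0 \<le> \<eta> j" using eta_pos[of j] by simp
      show "0 \<le> p j * \<alpha> (Suc j)" using ppos[of j] alpha_nonneg[of "Suc j"] by simp
    qed
    also have "\<dots> = c j" unfolding c_def prec[of j, symmetric] by (simp add: algebra_simps)
    finally show "c (Suc j) \<le> c j" .
  qed
  have key: "\<And>u. u \<in> X \<Longrightarrow> 2 * (\<Sum>j<k. wt j * inner (F u) (y j - u)) \<le>
      \<eta> 0 * DX\<^sup>2 + (\<Sum>j<k. \<eta> j * pm1 j * \<delta> j) + 2 * (\<Sum>j<k. lam j * (\<eta> j)\<^sup>2 * p j) * CH * DX"
  proof -
    fix u assume u: "u \<in> X"
    define \<phi> where "\<phi> = (%j. (norm (x j - u))\<^sup>2)"
    define \<psi> where "\<psi> = (%j. (norm (xprev j - u))\<^sup>2)"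
    define g where "g = (%j. inner (F u) (y j - u))"
    define h where "h = (%j. lam j * (\<eta> j)\<^sup>2 * p j * CH * DX)"
    have \<phi>b: "\<And>j. 0 \<le> \<phi> j \<and> \<phi> j \<le> DX\<^sup>2" unfolding \<phi>_def using dX[OF xX u] norm_ge_zero
      by (simp add: power_mono)
    have \<psi>b: "\<And>j. 0 \<le> \<psi> j \<and> \<psi> j \<le> DX\<^sup>2" unfolding \<psi>_def using dX[OF xprevX u] norm_ge_zero
      by (simp add: power_mono)
    have step: "\<And>K. \<eta> K * p K * \<phi> (Suc K) \<le> \<eta> K * pm1 K * (norm (w K - u))\<^sup>2 - 2 * wt K * g K + 2 * h K"
    proof -
      fix K
      have S: "(norm (x (Suc K) - u))\<^sup>2 \<le> (1 - \<beta> K) * (norm (w K - u))\<^sup>2 - 2 * lam K * g K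
          + 2 * lam K * \<eta> K * inner (H u) (u - y K)"
        unfolding \<beta>_def L_def g_def
        by (rule step_core[OF X_convex X_closed X_ne Om_convex Om_closed Om_ne X_sub Om_sub F_mono
              H_strong F_lip H_lip LF_pos LH_pos mu_pos lambda_pos eta_pos lambda_bound w'_def y_def x_next u])
      have "inner (H u) (u - y K) \<le> norm (H u) * norm (u - y K)" by (rule norm_cauchy_schwarz)
      also have "\<dots> \<le> CH * DX" using CH[OF u] dX[OF u yX] by (simp add: mult_mono CHnn)
      finally have hb: "inner (H u) (u - y K) \<le> CH * DX" .
      have lep: "0 < lam K * \<eta> K" using lambda_pos eta_pos by simp
      have "2 * lam K * \<eta> K * inner (H u) (u - y K) \<le> 2 * lam K * \<eta> K * (CH * DX)"
        using mult_left_mono[OF hb, of "2 * lam K * \<eta> K"] lep by (simp add: mult.assoc)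
      with S have S2: "\<phi> (Suc K) \<le> (1 - \<beta> K) * (norm (w K - u))\<^sup>2 - 2 * lam K * g K + 2 * lam K * \<eta> K * (CH * DX)"
        unfolding \<phi>_def by linarith
      have ep: "\<eta> K * p K > 0" using eta_pos ppos by simp
      have "\<eta> K * p K * \<phi> (Suc K) \<le> \<eta> K * p K * ((1 - \<beta> K) * (norm (w K - u))\<^sup>2 - 2 * lam K * g K + 2 * lam K * \<eta> K * (CH * DX))"
        using S2 ep by (simp add: mult_left_mono)
      also have "\<dots> = \<eta> K * (p K * (1 - \<beta> K)) * (norm (w K - u))\<^sup>2 - 2 * wt K * g K + 2 * h K"
        unfolding wt_def h_def by (simp add: algebra_simps power2_eq_square)
      finally show "\<eta> K * p K * \<phi> (Suc K) \<le> \<eta> K * pm1 K * (norm (w K - u))\<^sup>2 - 2 * wt K * g K + 2 * h K"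
        using prec[of K] by simp
    qed
    have inert: "\<And>K. (norm (w K - u))\<^sup>2 = (1 + \<alpha> K) * \<phi> K - \<alpha> K * \<psi> K + \<delta> K"
    proof -
      fix K
      have "w K - u = (1 + \<alpha> K) *\<^sub>R (x K - u) - \<alpha> K *\<^sub>R (xprev K - u)"
        using w_def[of K] unfolding xprev_def by (simp add: algebra_simps)
      moreover have "x K - xprev K = (x K - u) - (xprev K - u)" by simp
      ultimately show "(norm (w K - u))\<^sup>2 = (1 + \<alpha> K) * \<phi> K - \<alpha> K * \<psi> K + \<delta> K"
        unfolding \<phi>_def \<psi>_def \<delta>_def by (simp only: inert_id)
    qed
    have inv: "\<And>K. \<eta> K * pm1 K * \<phi> K - c K * \<psi> K + 2 * (\<Sum>j<K. wt j * g j)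
        \<le> \<eta> 0 * DX\<^sup>2 - c K * DX\<^sup>2 + (\<Sum>j<K. \<eta> j * pm1 j * \<delta> j + 2 * h j)"
    proof -
      fix K show "\<eta> K * pm1 K * \<phi> K - c K * \<psi> K + 2 * (\<Sum>j<K. wt j * g j)
        \<le> \<eta> 0 * DX\<^sup>2 - c K * DX\<^sup>2 + (\<Sum>j<K. \<eta> j * pm1 j * \<delta> j + 2 * h j)"
      proof (induction K)
        case 0
        have e: "\<psi> 0 = \<phi> 0" unfolding \<psi>_def \<phi>_def xprev_def xm1_def by simp
        have "(\<eta> 0 * (1 - \<alpha> 0)) * \<phi> 0 \<le> (\<eta> 0 * (1 - \<alpha> 0)) * DX\<^sup>2"
          using \<phi>b[of 0] alpha0 eta_pos[of 0] by (intro mult_left_mono) auto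
        then show ?case using e unfolding c_def pm1_def by (simp add: algebra_simps)
      next
        case (Suc K)
        have e1: "pm1 (Suc K) = p K" unfolding pm1_def by simp
        have e2: "\<psi> (Suc K) = \<phi> K" unfolding \<psi>_def \<phi>_def xprev_def by simp
        have m1: "\<eta> (Suc K) * p K * \<phi> (Suc K) \<le> \<eta> K * p K * \<phi> (Suc K)"
          using eta_noninc[of K] ppos[of K] \<phi>b[of "Suc K"] by (intro mult_right_mono) auto
        have m2: "\<eta> K * pm1 K * (norm (w K - u))\<^sup>2 = \<eta> K * pm1 K * \<phi> K + c K * \<phi> K - c K * \<psi> K + \<eta> K * pm1 K * \<delta> K"
          unfolding inert c_def by (simp add: algebra_simps)
        have m3: "(c K - c (Suc K)) * \<phi> K \<le> (c K - c (Suc K)) * DX\<^sup>2"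
          using cmono[of K] \<phi>b[of K] by (intro mult_left_mono) auto
        have s1: "(\<Sum>j<Suc K. wt j * g j) = (\<Sum>j<K. wt j * g j) + wt K * g K" by simp
        have s2: "(\<Sum>j<Suc K. \<eta> j * pm1 j * \<delta> j + 2 * h j) = (\<Sum>j<K. \<eta> j * pm1 j * \<delta> j + 2 * h j) + (\<eta> K * pm1 K * \<delta> K + 2 * h K)" by simp
        show ?case unfolding e1 e2 s1 s2 using Suc.IH step[of K] m1 m2 m3 by (simp add: algebra_simps)
      qed
    qed
    have i1: "0 \<le> \<eta> k * pm1 k * \<phi> k" using eta_pos[of k] pm1pos[of k] \<phi>b[of k] by simp
    have i2: "c k * \<psi> k \<le> c k * DX\<^sup>2" using cnn[of k] \<psi>b[of k] by (intro mult_left_mono) auto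
    have s: "(\<Sum>j<k. \<eta> j * pm1 j * \<delta> j + 2 * h j) = (\<Sum>j<k. \<eta> j * pm1 j * \<delta> j) + 2 * (\<Sum>j<k. lam j * (\<eta> j)\<^sup>2 * p j) * CH * DX"
      unfolding h_def by (simp add: sum.distrib sum_distrib_left sum_distrib_right algebra_simps)
    show "2 * (\<Sum>j<k. wt j * inner (F u) (y j - u)) \<le>
      \<eta> 0 * DX\<^sup>2 + (\<Sum>j<k. \<eta> j * pm1 j * \<delta> j) + 2 * (\<Sum>j<k. lam j * (\<eta> j)\<^sup>2 * p j) * CH * DX"
      using inv[of k] i1 i2 s unfolding g_def by linarith
  qed
  define RHS where "RHS = \<eta> 0 * DX\<^sup>2 + (\<Sum>j<k. \<eta> j * pm1 j * \<delta> j) + 2 * (\<Sum>j<k. lam j * (\<eta> j)\<^sup>2 * p j) * CH * DX"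
  have wtpos: "\<And>j. wt j > 0" unfolding wt_def using lambda_pos eta_pos ppos by simp
  have Lampos: "Lam > 0" unfolding Lam_def wt_def[symmetric]
    using k_ge wtpos by (intro sum_pos) (auto simp: lessThan_empty_iff)
  have Lamwt: "Lam = (\<Sum>j<k. wt j)" unfolding Lam_def wt_def ..
  have ybarwt: "ybar = (1 / Lam) *\<^sub>R (\<Sum>j<k. wt j *\<^sub>R y j)" unfolding ybar_def wt_def ..
  have inner_eq: "\<And>u. inner (F u) (ybar - u) = (1 / Lam) * (\<Sum>j<k. wt j * inner (F u) (y j - u))"
  proof -
    fix u
    have "(\<Sum>j<k. wt j *\<^sub>R (y j - u)) = (\<Sum>j<k. wt j *\<^sub>R y j) - Lam *\<^sub>R u"
      unfolding Lamwt by (simp add: scaleR_diff_right sum_subtractf scaleR_sum_left)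
    moreover have "(1 / Lam) *\<^sub>R ((\<Sum>j<k. wt j *\<^sub>R y j) - Lam *\<^sub>R u) = (1 / Lam) *\<^sub>R (\<Sum>j<k. wt j *\<^sub>R y j) - u"
      using Lampos by (simp add: scaleR_diff_right)
    ultimately have "ybar - u = (1 / Lam) *\<^sub>R (\<Sum>j<k. wt j *\<^sub>R (y j - u))"
      unfolding ybarwt by metis
    thus "inner (F u) (ybar - u) = (1 / Lam) * (\<Sum>j<k. wt j * inner (F u) (y j - u))"
      by (simp add: inner_sum_right)
  qed
  have ub: "\<And>u. u \<in> X \<Longrightarrow> inner (F u) (ybar - u) \<le> 1 / (2 * Lam) * RHS"
  proof -
    fix u assume u: "u \<in> X"
    have "(\<Sum>j<k. wt j * inner (F u) (y j - u)) \<le> RHS / 2" using key[OF u] unfolding RHS_def by simp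
    hence "(1 / Lam) * (\<Sum>j<k. wt j * inner (F u) (y j - u)) \<le> (1 / Lam) * (RHS / 2)"
      using Lampos by (intro mult_left_mono) auto
    thus "inner (F u) (ybar - u) \<le> 1 / (2 * Lam) * RHS" using inner_eq[of u] by simp
  qed
  have Gub: "Gap ybar F X \<le> 1 / (2 * Lam) * RHS"
    unfolding Gap_def using X_ne ub by (intro cSUP_least) auto
  have ybarX: "ybar \<in> X"
  proof -
    have "ybar = (\<Sum>j<k. (wt j / Lam) *\<^sub>R y j)" unfolding ybarwt
      by (simp add: scaleR_sum_right)
    moreover have "(\<Sum>j<k. wt j / Lam) = 1" using Lampos unfolding Lamwt
      by (simp add: sum_divide_distrib[symmetric])
    moreover have "(\<Sum>j<k. (wt j / Lam) *\<^sub>R y j) \<in> X"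
      using wtpos Lampos \<open>(\<Sum>j<k. wt j / Lam) = 1\<close>
      by (intro convex_sum[OF finite_lessThan X_convex]) (auto intro: yX less_imp_le)
    ultimately show ?thesis by simp
  qed
  obtain z where z: "z \<in> X" "\<forall>v\<in>X. inner (F z) (v - z) \<ge> 0" using Q_ne by blast
  have bdd: "bdd_above ((\<lambda>u. inner (F u) (ybar - u)) ` X)"
    using ub by (intro bdd_aboveI2) auto
  have "0 \<le> inner (F z) (ybar - z)" using z ybarX by blast
  also have "\<dots> \<le> Gap ybar F X" unfolding Gap_def using bdd z by (intro cSUP_upper) auto
  finally have Glb: "0 \<le> Gap ybar F X" .
  have main: "0 \<le> Gap ybar F X \<and> Gap ybar F X \<le> 1 / (2 * Lam) *
              (\<eta> 0 * DX\<^sup>2 + (\<Sum>j<k. \<eta> j * pm1 j * \<delta> j)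
               + 2 * (\<Sum>j<k. lam j * (\<eta> j)\<^sup>2 * p j) * CH * DX)"
    using Glb Gub unfolding RHS_def by simp
  show ?thesis unfolding Let_def using main
    unfolding L_def \<beta>_def p_def pm1_def xprev_def \<delta>_def Lam_def ybar_def DX_def CH_def .
qed

end
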